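(* Let $X\subseteq\Omega$ be club in $\Omega$ with $0\notin X$. If $\xi\in X$ and $\xi<\Theta_X(\varepsilon_{\Omega+1})$, then there is $\zeta<\varepsilon_{\Omega+1}$ with $\Theta_X(\zeta)=\xi$.
   Context: $\Omega$ is the first uncountable ordinal; $\varepsilon_{\Omega+1}$ the least $\varepsilon>\Omega$ with $\omega^\varepsilon=\varepsilon$. Every $0<\xi<\varepsilon_{\Omega+1}$ has a unique $\Omega$-normal form $\xi=\Omega^{\alpha}\beta+\gamma$ with $0<\beta<\Omega$, $\gamma<\Omega^{\alpha}$; $C(0)=\{0\}$, $C(\Omega^\alpha\beta+\gamma)=C(\alpha)\cup C(\gamma)\cup\{\beta\}$; $\xi^*=\max C(\xi)$. $\Theta_X(\xi)$ is defined by recursion on $\xi<\varepsilon_{\Omega+1}$ as the least $\theta\in X$ with $\theta>\xi^*$ such that every $\zeta<\xi$ with $\zeta^*<\theta$ satisfies $\Theta_X(\zeta)<\theta$. With $\Omega_0=1$, $\Omega_{n+1}=\Omega^{\Omega_n}$, $\Theta_X(\varepsilon_{\Omega+1}):=\sup_{n<\omega}\Theta_X(\Omega_n)$. *)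

theory Defs
  imports Main "HOL-Library.Countable_Set"
begin

text \<open>Omega (the first uncountable ordinal) is modelled by a well-ordered type 'o
whose universe is uncountable while every proper initial segment is countable
(i.e. 'o has order type omega_1).  Ordinals below epsilon_{Omega+1} are represented
by their Omega-normal forms: Node a b c stands for Omega^a * b + c.\<close>

definition omega1_type :: "'o::wellorder itself \<Rightarrow> bool" where
  "omega1_type _ \<longleftrightarrow> uncountable (UNIV :: 'o set) \<and> (\<forall>x::'o. countable {y. y < x})"

definition ozero :: "'o::wellorder" where
  "ozero = (LEAST x. True)"

definition oone :: "'o::wellorder" where
  "oone = (LEAST x. ozero < x)"

datatype 'o onf = Zero | Node "'o onf" 'o "'o onf"

fun onf_less :: "'o::wellorder onf \<Rightarrow> 'o onf \<Rightarrow> bool" where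
  "onf_less Zero Zero = False"
| "onf_less Zero (Node _ _ _) = True"
| "onf_less (Node _ _ _) Zero = False"
| "onf_less (Node a b c) (Node a' b' c') =
     (onf_less a a' \<or> (a = a' \<and> (b < b' \<or> (b = b' \<and> onf_less c c'))))"

text \<open>Well-formed normal forms: 0 < beta and gamma < Omega^alpha.\<close>
fun onf_valid :: "'o::wellorder onf \<Rightarrow> bool" where
  "onf_valid Zero = True"
| "onf_valid (Node a b c) =
     (onf_valid a \<and> onf_valid c \<and> ozero < b \<and>
      (case c of Zero \<Rightarrow> True | Node a' _ _ \<Rightarrow> onf_less a' a))"

fun coeffs :: "'o::wellorder onf \<Rightarrow> 'o set" where
  "coeffs Zero = {ozero}"
| "coeffs (Node a b c) = coeffs a \<union> coeffs c \<union> {b}"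

definition ostar :: "'o::wellorder onf \<Rightarrow> 'o" where
  "ostar x = Max (coeffs x)"

definition onf_rel :: "('o::wellorder onf \<times> 'o onf) set" where
  "onf_rel = {(z, x). onf_valid z \<and> onf_valid x \<and> onf_less z x}"

definition Theta :: "'o::wellorder set \<Rightarrow> 'o onf \<Rightarrow> 'o" where
  "Theta X = wfrec onf_rel (\<lambda>T x. LEAST t. t \<in> X \<and> ostar x < t \<and>
       (\<forall>z. onf_valid z \<and> onf_less z x \<and> ostar z < t \<longrightarrow> T z < t))"

primrec OmegaN :: "nat \<Rightarrow> 'o::wellorder onf" where
  "OmegaN 0 = Node Zero oone Zero"
| "OmegaN (Suc n) = Node (OmegaN n) oone Zero"

text \<open>Theta_X(epsilon_{Omega+1}) = sup_n Theta_X(Omega_n) (least upper bound in Omega).\<close>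
definition Theta_eps :: "'o::wellorder set \<Rightarrow> 'o" where
  "Theta_eps X = (LEAST y. \<forall>n. Theta X (OmegaN n) \<le> y)"

definition club :: "'o::wellorder set \<Rightarrow> bool" where
  "club X \<longleftrightarrow> (\<forall>a. \<exists>x\<in>X. a < x) \<and>
     (\<forall>g. (\<exists>a. a < g) \<and> (\<forall>a<g. \<exists>x\<in>X. a < x \<and> x < g) \<longrightarrow> g \<in> X)"

end

theory Submission
  imports Defs
begin

lemma my_acc_induct[consumes 1, case_names step]:
  assumes "a \<in> Wellfounded.acc r"
    and "\<And>x. x \<in> Wellfounded.acc r \<Longrightarrow> (\<And>y. (y, x) \<in> r \<Longrightarrow> P y) \<Longrightarrow> P x"
  shows "P a"
  using assms by (rule acc_induct_rule)

lemma acc_Zero: "(Zero::'o::wellorder onf) \<in> Wellfounded.acc onf_rel"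
proof (rule accI)
  fix y :: "'o onf" assume "(y, Zero) \<in> onf_rel"
  hence "onf_less y Zero" by (simp add: onf_rel_def)
  then show "y \<in> Wellfounded.acc onf_rel" by (cases y) simp_all
qed

lemma acc_Node_aux:
  assumes "a \<in> Wellfounded.acc onf_rel"
  shows "\<forall>b c. onf_valid (Node a b c) \<longrightarrow> Node a b c \<in> Wellfounded.acc onf_rel"
  using assms
proof (induction a rule: my_acc_induct)
  case (step a)
  have small: "x \<in> Wellfounded.acc onf_rel"
    if "onf_valid x" "x = Zero \<or> (\<exists>a' b' c'. x = Node a' b' c' \<and> onf_less a' a)" "onf_valid a" for x
  proof (cases x)
    case Zero then show ?thesis using acc_Zero by simp
  next
    case (Node a' b' c')
    with that have "onf_less a' a" "onf_valid a'" by auto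
    with that have "(a', a) \<in> onf_rel" by (simp add: onf_rel_def)
    with step.IH Node that show ?thesis by blast
  qed
  show ?case
  proof (intro allI impI)
    fix b c assume v: "onf_valid (Node a b c)"
    hence va: "onf_valid a" by simp
    show "Node a b c \<in> Wellfounded.acc onf_rel" using v
    proof (induction b arbitrary: c rule: less_induct)
      case (less b)
      have cacc: "c \<in> Wellfounded.acc onf_rel"
      proof (cases c)
        case Zero then show ?thesis using acc_Zero by simp
      next
        case (Node a1 b1 c1)
        then have "onf_valid c" "onf_less a1 a" using less.prems by simp_all
        then show ?thesis using small va Node by blast
      qed
      show ?case using cacc less.prems
      proof (induction c rule: my_acc_induct)
        case (step c)
        show ?case
        proof (rule accI)
          fix z assume "(z, Node a b c) \<in> onf_rel"
          hence zv: "onf_valid z" and zl: "onf_less z (Node a b c)" by (auto simp: onf_rel_def)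
          show "z \<in> Wellfounded.acc onf_rel"
          proof (cases z)
            case Zero then show ?thesis using acc_Zero by simp
          next
            case (Node a' b' c')
            consider "onf_less a' a" | "a' = a" "b' < b" | "a' = a" "b' = b" "onf_less c' c"
              using zl Node by auto
            then show ?thesis
            proof cases
              case 1 then show ?thesis using small zv Node va by blast
            next
              case 2 then show ?thesis using less.IH zv Node by blast
            next
              case 3
              have "onf_valid c'" "onf_valid c" using zv Node step.prems by auto
              with 3 have "(c', c) \<in> onf_rel" by (simp add: onf_rel_def)
              with step.IH 3 zv Node show ?thesis by blast
            qed
          qed
        qed
      qed
    qed
  qed
qed

lemma valid_acc: "onf_valid x \<Longrightarrow> x \<in> Wellfounded.acc onf_rel"
proof (induction x)
  case Zero show ?case by (rule acc_Zero)
next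
  case (Node a b c)
  then have "a \<in> Wellfounded.acc onf_rel" by simp
  with acc_Node_aux Node.prems show ?case by blast
qed

lemma wf_onf_rel: "wf (onf_rel :: ('o::wellorder onf \<times> 'o onf) set)"
proof (rule acc_wfI, intro allI)
  fix x :: "'o onf"
  show "x \<in> Wellfounded.acc onf_rel"
  proof (cases "onf_valid x")
    case True then show ?thesis by (rule valid_acc)
  next
    case False
    show ?thesis
    proof (rule accI)
      fix y assume "(y, x) \<in> onf_rel"
      with False show "y \<in> Wellfounded.acc onf_rel" by (simp add: onf_rel_def)
    qed
  qed
qed

lemma Theta_unfold:
  "Theta X x = (LEAST t. t \<in> X \<and> ostar x < t \<and>
       (\<forall>z. onf_valid z \<and> onf_less z x \<and> ostar z < t \<longrightarrow> cut (Theta X) onf_rel x z < t))"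
  unfolding Theta_def by (rule wfrec[OF wf_onf_rel])

lemma Theta_unfold_valid:
  assumes "onf_valid x"
  shows "Theta X x = (LEAST t. t \<in> X \<and> ostar x < t \<and>
       (\<forall>z. onf_valid z \<and> onf_less z x \<and> ostar z < t \<longrightarrow> Theta X z < t))"
proof -
  have eq: "\<And>t. (\<forall>z. onf_valid z \<and> onf_less z x \<and> ostar z < t \<longrightarrow> cut (Theta X) onf_rel x z < t)
     = (\<forall>z. onf_valid z \<and> onf_less z x \<and> ostar z < t \<longrightarrow> Theta X z < t)"
    using assms by (auto simp: cut_apply onf_rel_def)
  show ?thesis by (subst Theta_unfold) (simp only: eq)
qed

lemma coeffs_OmegaN: "coeffs (OmegaN n) = {ozero, oone}"
  by (induction n) auto

theorem corollary3p4:
  fixes X :: "'o::wellorder set" and xi :: 'o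
  assumes "omega1_type TYPE('o)"
    and "club X" and "ozero \<notin> X"
    and "xi \<in> X" and "xi < Theta_eps X"
  shows "\<exists>z. onf_valid z \<and> Theta X z = xi"
proof -
  have "ozero \<le> xi" unfolding ozero_def by (rule Least_le) simp
  moreover have "xi \<noteq> ozero" using assms by auto
  ultimately have zx: "ozero < xi" by simp
  have z1: "ozero < (oone::'o)" using LeastI[of "\<lambda>a. ozero < a" xi, OF zx] by (metis oone_def)
  have onex: "oone \<le> xi" unfolding oone_def by (rule Least_le) (rule zx)
  have "\<exists>n. xi < Theta X (OmegaN n)"
  proof (rule ccontr)
    assume "\<not> ?thesis"
    hence "\<forall>n. Theta X (OmegaN n) \<le> xi" by (meson not_le)
    hence "Theta_eps X \<le> xi" unfolding Theta_eps_def by (rule Least_le)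
    with assms(5) show False by simp
  qed
  then obtain n where n: "xi < Theta X (OmegaN n)" by blast
  have vOm: "onf_valid (OmegaN m :: 'o onf)" for m
    by (induction m) (auto simp: z1)
  define S where "S = {z. onf_valid z \<and> ostar z < xi \<and> xi \<le> Theta X z}"
  have "S \<noteq> {}"
  proof (cases "oone < xi")
    case True
    have "ostar (OmegaN n :: 'o onf) = oone" unfolding ostar_def coeffs_OmegaN using z1
      by (simp add: max_def less_imp_le)
    then have "OmegaN n \<in> S" using True n vOm unfolding S_def by auto
    then show ?thesis by auto
  next
    case False
    hence xe: "xi = oone" using onex by simp
    have TZ: "Theta X Zero = (LEAST t. t \<in> X \<and> ozero < t)"
    proof -
      have nl: "\<And>z::'o onf. \<not> onf_less z Zero" by (case_tac z) auto
      show ?thesis by (subst Theta_unfold_valid) (simp_all add: ostar_def nl)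
    qed
    have "Theta X Zero \<in> X \<and> ozero < Theta X Zero"
      unfolding TZ by (rule LeastI[of _ xi]) (simp add: assms zx)
    hence "oone \<le> Theta X Zero" unfolding oone_def by (intro Least_le) simp
    hence "Zero \<in> S" unfolding S_def using xe zx by (simp add: ostar_def)
    then show ?thesis by auto
  qed
  then obtain w where "w \<in> S" by auto
  then obtain z where zS: "z \<in> S" and zmin: "\<And>y. (y, z) \<in> onf_rel \<Longrightarrow> y \<notin> S"
    using wfE_min[OF wf_onf_rel] by metis
  have vz: "onf_valid z" and sz: "ostar z < xi" and ge: "xi \<le> Theta X z" using zS by (auto simp: S_def)
  have "Theta X z \<le> xi"
    unfolding Theta_unfold_valid[OF vz]
  proof (rule Least_le, intro conjI allI impI)
    show "xi \<in> X" by (rule assms(4))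
    show "ostar z < xi" by (rule sz)
    fix y assume y: "onf_valid y \<and> onf_less y z \<and> ostar y < xi"
    hence "(y, z) \<in> onf_rel" using vz by (simp add: onf_rel_def)
    hence "y \<notin> S" by (rule zmin)
    with y show "Theta X y < xi" by (auto simp: S_def)
  qed
  with ge vz show ?thesis by (intro exI[of _ z]) simp
qed

end
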